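(* CTL*$_{cd}$ is strictly more expressive than CTL* and is incomparable with the modal $\mu$-calculus. Precisely: (1) every CTL* state formula is a CTL*$_{cd}$ state formula, and there is a CTL*$_{cd}$ state formula $\varphi$ such that no CTL* state formula $\chi$ satisfies ($\mathcal K\models\varphi\iff\mathcal K\models\chi$) for all Kripke structures $\mathcal K$; (2) there is a CTL*$_{cd}$ state formula not equivalent (over all Kripke structures, evaluated at the initial world) to any modal $\mu$-calculus formula; (3) there is a modal $\mu$-calculus formula (e.g. $\nu x.\,(p\wedge\Box\Box x)$) not equivalent (over all Kripke structures, evaluated at the initial world) to any CTL*$_{cd}$ state formula.
   Context: A Kripke structure over a finite set $AP$ of atomic propositions is a tuple $\mathcal K=(AP,W,R,L,w_I)$ where $W$ is a countable non-empty set of worlds, $w_I\in W$ is the initial world, $R\subseteq W\times W$ is a left-total transition relation (every world has at least one $R$-successor), and $L:W\to 2^{AP}$ is a labelling function. A path is an infinite sequence $\pi=\pi_0\pi_1\cdots$ of worlds with $(\pi_i,\pi_{i+1})\in R$ for all $i\in\mathbb N$; $\mathrm{Pth}(w)$ is the set of paths with $\pi_0=w$. A path $\pi$ is a cycle if for every $i\in\mathbb N$ there is $j>i$ with $\pi_j=\pi_0$ (i.e. $\pi_0$ occurs infinitely often in $\pi$); $\mathrm{Cyc}(w)$ is the set of cycles with $\pi_0=w$. Syntax of CTL*$_{cd}$: state formulas $\varphi::=p\mid\neg\varphi\mid\varphi\wedge\varphi\mid\varphi\vee\varphi\mid \mathsf E\psi\mid\mathsf A\psi\mid\mathsf E^{c}\psi\mid\mathsf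 A^{c}\psi$ with $p\in AP$; path formulas $\psi::=\varphi\mid\neg\psi\mid\psi\wedge\psi\mid\psi\vee\psi\mid\mathsf X\psi\mid\psi\,\mathsf U\,\psi$. Semantics: $\mathcal K,w\models p$ iff $p\in L(w)$; Boolean connectives as usual; $\mathcal K,w\models\mathsf E\psi$ iff some $\pi\in\mathrm{Pth}(w)$ has $\mathcal K,\pi,0\models\psi$; $\mathcal K,w\models\mathsf A\psi$ iff every $\pi\in\mathrm{Pth}(w)$ has $\mathcal K,\pi,0\models\psi$; $\mathcal K,w\models\mathsf E^{c}\psi$ iff some $\pi\in\mathrm{Cyc}(w)$ has $\mathcal K,\pi,0\models\psi$; $\mathcal K,w\models\mathsf A^{c}\psi$ iff every $\pi\in\mathrm{Cyc}(w)$ has $\mathcal K,\pi,0\models\psi$. For paths: $\mathcal K,\pi,i\models\varphi$ (state formula) iff $\mathcal K,\pi_i\models\varphi$; Boolean connectives as usual; $\mathcal K,\pi,i\models\mathsf X\psi$ iff $\mathcal K,\pi,i+1\models\psi$; $\mathcal K,\pi,i\models\psi_1\mathsf U\psi_2$ iff there is $k\ge0$ with $\mathcal K,\pi,i+k\models\psi_2$ and $\mathcal K,\pi,i+j\models\psi_1$ for all $0\le j<k$. $\mathcal K\models\varphi$ iff $\mathcal K,w_I\models\varphi$. CTL* is the fragment of CTL*$_{cd}$ without the operators $\mathsf E^c,\mathsf A^c$. The modal $\mu$-calculus is the standard one, interpreted over Kripke structures at the initial world, with $\Box$ the universal successor modality. *)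

theory Defs
  imports Main
begin

text \<open>Worlds are natural numbers (every countable set of worlds is, up to renaming,
a subset of nat). Atomic propositions range over a finite type 'a (the set AP).\<close>

record 'a kripke =
  worlds :: "nat set"
  trans :: "(nat \<times> nat) set"
  label :: "nat \<Rightarrow> 'a set"
  init :: nat

definition is_kripke :: "('a::finite) kripke \<Rightarrow> bool" where
  "is_kripke K \<longleftrightarrow> worlds K \<noteq> {} \<and> init K \<in> worlds K \<and>
     trans K \<subseteq> worlds K \<times> worlds K \<and>
     (\<forall>w \<in> worlds K. \<exists>v. (w, v) \<in> trans K)"

definition is_path :: "'a kripke \<Rightarrow> (nat \<Rightarrow> nat) \<Rightarrow> bool" where
  "is_path K \<pi> \<longleftrightarrow> (\<forall>i. (\<pi> i, \<pi> (Suc i)) \<in> trans K)"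

definition Pth :: "'a kripke \<Rightarrow> nat \<Rightarrow> (nat \<Rightarrow> nat) set" where
  "Pth K w = {\<pi>. is_path K \<pi> \<and> \<pi> 0 = w}"

definition Cyc :: "'a kripke \<Rightarrow> nat \<Rightarrow> (nat \<Rightarrow> nat) set" where
  "Cyc K w = {\<pi>. \<pi> \<in> Pth K w \<and> (\<forall>i. \<exists>j>i. \<pi> j = \<pi> 0)}"

datatype 'a sform =
    Prop 'a
  | SNot "'a sform"
  | SAnd "'a sform" "'a sform"
  | SOr "'a sform" "'a sform"
  | Ex "'a pform"
  | All "'a pform"
  | ExC "'a pform"
  | AllC "'a pform"
and 'a pform =
    State "'a sform"
  | PNot "'a pform"
  | PAnd "'a pform" "'a pform"
  | POr "'a pform" "'a pform"
  | Next "'a pform"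
  | Until "'a pform" "'a pform"

primrec sat :: "'a kripke \<Rightarrow> nat \<Rightarrow> 'a sform \<Rightarrow> bool"
and psat :: "'a kripke \<Rightarrow> (nat \<Rightarrow> nat) \<Rightarrow> nat \<Rightarrow> 'a pform \<Rightarrow> bool" where
  "sat K w (Prop p) = (p \<in> label K w)"
| "sat K w (SNot \<phi>) = (\<not> sat K w \<phi>)"
| "sat K w (SAnd \<phi> \<psi>) = (sat K w \<phi> \<and> sat K w \<psi>)"
| "sat K w (SOr \<phi> \<psi>) = (sat K w \<phi> \<or> sat K w \<psi>)"
| "sat K w (Ex \<psi>) = (\<exists>\<pi> \<in> Pth K w. psat K \<pi> 0 \<psi>)"
| "sat K w (All \<psi>) = (\<forall>\<pi> \<in> Pth K w. psat K \<pi> 0 \<psi>)"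
| "sat K w (ExC \<psi>) = (\<exists>\<pi> \<in> Cyc K w. psat K \<pi> 0 \<psi>)"
| "sat K w (AllC \<psi>) = (\<forall>\<pi> \<in> Cyc K w. psat K \<pi> 0 \<psi>)"
| "psat K \<pi> i (State \<phi>) = sat K (\<pi> i) \<phi>"
| "psat K \<pi> i (PNot \<psi>) = (\<not> psat K \<pi> i \<psi>)"
| "psat K \<pi> i (PAnd \<psi>1 \<psi>2) = (psat K \<pi> i \<psi>1 \<and> psat K \<pi> i \<psi>2)"
| "psat K \<pi> i (POr \<psi>1 \<psi>2) = (psat K \<pi> i \<psi>1 \<or> psat K \<pi> i \<psi>2)"
| "psat K \<pi> i (Next \<psi>) = psat K \<pi> (Suc i) \<psi>"
| "psat K \<pi> i (Until \<psi>1 \<psi>2) =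
     (\<exists>k. psat K \<pi> (i + k) \<psi>2 \<and> (\<forall>j<k. psat K \<pi> (i + j) \<psi>1))"

definition models :: "'a kripke \<Rightarrow> 'a sform \<Rightarrow> bool" where
  "models K \<phi> = sat K (init K) \<phi>"

primrec is_ctls :: "'a sform \<Rightarrow> bool"
and is_ctls_path :: "'a pform \<Rightarrow> bool" where
  "is_ctls (Prop p) = True"
| "is_ctls (SNot \<phi>) = is_ctls \<phi>"
| "is_ctls (SAnd \<phi> \<psi>) = (is_ctls \<phi> \<and> is_ctls \<psi>)"
| "is_ctls (SOr \<phi> \<psi>) = (is_ctls \<phi> \<and> is_ctls \<psi>)"
| "is_ctls (Ex \<psi>) = is_ctls_path \<psi>"
| "is_ctls (All \<psi>) = is_ctls_path \<psi>"
| "is_ctls (ExC \<psi>) = False"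
| "is_ctls (AllC \<psi>) = False"
| "is_ctls_path (State \<phi>) = is_ctls \<phi>"
| "is_ctls_path (PNot \<psi>) = is_ctls_path \<psi>"
| "is_ctls_path (PAnd \<psi>1 \<psi>2) = (is_ctls_path \<psi>1 \<and> is_ctls_path \<psi>2)"
| "is_ctls_path (POr \<psi>1 \<psi>2) = (is_ctls_path \<psi>1 \<and> is_ctls_path \<psi>2)"
| "is_ctls_path (Next \<psi>) = is_ctls_path \<psi>"
| "is_ctls_path (Until \<psi>1 \<psi>2) = (is_ctls_path \<psi>1 \<and> is_ctls_path \<psi>2)"

datatype 'a mu =
    MProp 'a
  | MNProp 'a
  | MVar nat
  | MAnd "'a mu" "'a mu"
  | MOr "'a mu" "'a mu"
  | MDia "'a mu"
  | MBox "'a mu"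
  | MLfp nat "'a mu"
  | MGfp nat "'a mu"

primrec mu_sem :: "'a kripke \<Rightarrow> (nat \<Rightarrow> nat set) \<Rightarrow> 'a mu \<Rightarrow> nat set" where
  "mu_sem K V (MProp p) = {w \<in> worlds K. p \<in> label K w}"
| "mu_sem K V (MNProp p) = {w \<in> worlds K. p \<notin> label K w}"
| "mu_sem K V (MVar x) = V x \<inter> worlds K"
| "mu_sem K V (MAnd a b) = mu_sem K V a \<inter> mu_sem K V b"
| "mu_sem K V (MOr a b) = mu_sem K V a \<union> mu_sem K V b"
| "mu_sem K V (MDia a) = {w \<in> worlds K. \<exists>v. (w, v) \<in> trans K \<and> v \<in> mu_sem K V a}"
| "mu_sem K V (MBox a) = {w \<in> worlds K. \<forall>v. (w, v) \<in> trans K \<longrightarrow> v \<in> mu_sem K V a}"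
| "mu_sem K V (MLfp x a) =
     \<Inter> {S. S \<subseteq> worlds K \<and> mu_sem K (V(x := S)) a \<subseteq> S} \<inter> worlds K"
| "mu_sem K V (MGfp x a) =
     \<Union> {S. S \<subseteq> worlds K \<and> S \<subseteq> mu_sem K (V(x := S)) a}"

primrec mu_free :: "'a mu \<Rightarrow> nat set" where
  "mu_free (MProp p) = {}"
| "mu_free (MNProp p) = {}"
| "mu_free (MVar x) = {x}"
| "mu_free (MAnd a b) = mu_free a \<union> mu_free b"
| "mu_free (MOr a b) = mu_free a \<union> mu_free b"
| "mu_free (MDia a) = mu_free a"
| "mu_free (MBox a) = mu_free a"
| "mu_free (MLfp x a) = mu_free a - {x}"
| "mu_free (MGfp x a) = mu_free a - {x}"

definition mu_closed :: "'a mu \<Rightarrow> bool" where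
  "mu_closed \<phi> \<longleftrightarrow> mu_free \<phi> = {}"

definition mu_models :: "'a kripke \<Rightarrow> 'a mu \<Rightarrow> bool" where
  "mu_models K \<phi> \<longleftrightarrow> init K \<in> mu_sem K (\<lambda>_. {}) \<phi>"

end

theory Submission
  imports Defs
begin


definition K1 :: "'a kripke" where
  "K1 = \<lparr>worlds = {0}, trans = {(0,0)}, label = (\<lambda>_. {}), init = 0\<rparr>"
definition K2 :: "'a kripke" where
  "K2 = \<lparr>worlds = UNIV, trans = {(n, Suc n) | n. True}, label = (\<lambda>_. {}), init = 0\<rparr>"

lemma K1_kripke: "is_kripke (K1 :: ('a::finite) kripke)"
  by (auto simp: is_kripke_def K1_def)
lemma K2_kripke: "is_kripke (K2 :: ('a::finite) kripke)"
  by (auto simp: is_kripke_def K2_def)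

lemma Pth_K1: "Pth K1 0 = {\<lambda>_. 0}"
proof -
  { fix \<pi> assume "\<pi> \<in> Pth K1 0"
    hence h: "\<pi> 0 = 0" "\<And>i. (\<pi> i, \<pi> (Suc i)) \<in> {(0,0)}"
      by (auto simp: Pth_def is_path_def K1_def)
    have "\<pi> i = 0" for i using h(2)[of i] by auto
    hence "\<pi> = (\<lambda>_. 0)" by auto }
  moreover have "(\<lambda>_. 0) \<in> Pth K1 0" by (auto simp: Pth_def is_path_def K1_def)
  ultimately show ?thesis by blast
qed

lemma path_K2: "\<pi> \<in> Pth K2 w \<Longrightarrow> \<pi> i = w + i"
proof (induct i)
  case 0 then show ?case by (simp add: Pth_def)
next
  case (Suc i) then show ?case
    by (auto simp: Pth_def is_path_def K2_def dest: spec[of _ i])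
qed

lemma Pth_K2_ne: "(\<lambda>i. w + i) \<in> Pth K2 w"
  by (auto simp: Pth_def is_path_def K2_def)

lemma Cyc_K2: "Cyc (K2 :: 'a kripke) w = {}"
proof (rule equals0I)
  fix \<pi> assume a: "\<pi> \<in> Cyc (K2 :: 'a kripke) w"
  then have p: "\<pi> \<in> Pth (K2 :: 'a kripke) w" by (simp add: Cyc_def)
  from a obtain j where "j > 0" "\<pi> j = \<pi> 0" by (auto simp: Cyc_def)
  with path_K2[OF p, of j] path_K2[OF p, of 0] show False by simp
qed

lemma ctls_K12:
  fixes \<phi> :: "'a sform" and \<psi> :: "'a pform"
  shows "is_ctls \<phi> \<Longrightarrow> (\<forall>w. sat K2 w \<phi> = sat K1 0 \<phi>)"
    and "is_ctls_path \<psi> \<Longrightarrow> (\<forall>\<pi> i. psat K2 \<pi> i \<psi> = psat K1 (\<lambda>_. 0) i \<psi>)"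
proof (induct \<phi> and \<psi>)
  case (Ex \<psi>)
  then show ?case using Pth_K2_ne by (auto simp: Pth_K1)
next
  case (All \<psi>)
  then show ?case using Pth_K2_ne by (auto simp: Pth_K1)
qed (auto simp: K1_def K2_def)

lemma part1: "\<exists>\<phi> :: ('a::finite) sform. \<not> (\<exists>\<chi>. is_ctls \<chi> \<and>
             (\<forall>K. is_kripke K \<longrightarrow> (models K \<phi> \<longleftrightarrow> models K \<chi>)))"
proof -
  fix p :: 'a
  let ?\<phi> = "ExC (State (SNot (Prop p)))"
  have a: "models K1 ?\<phi>" using Pth_K1 by (auto simp: models_def Cyc_def K1_def)
  have b: "\<not> models K2 ?\<phi>" by (auto simp: models_def Cyc_K2)
  show ?thesis
  proof (intro exI[of _ ?\<phi>] notI, elim exE conjE)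
    fix \<chi> assume c: "is_ctls \<chi>" and e: "\<forall>K. is_kripke K \<longrightarrow> (models K ?\<phi> \<longleftrightarrow> models K \<chi>)"
    have "models K1 \<chi>" using e K1_kripke a by blast
    moreover have "\<not> models K2 \<chi>" using e K2_kripke b by blast
    ultimately show False using ctls_K12(1)[OF c] by (simp add: models_def K1_def K2_def)
  qed
qed

lemma mu_mono: "(\<forall>x. V x \<subseteq> V' x) \<Longrightarrow> mu_sem K V a \<subseteq> mu_sem K V' a"
proof (induct a arbitrary: V V')
  case (MLfp y a)
  have h: "\<And>S. mu_sem K (V(y := S)) a \<subseteq> mu_sem K (V'(y := S)) a"
    using MLfp by simp
  have "{S. S \<subseteq> worlds K \<and> mu_sem K (V'(y := S)) a \<subseteq> S} \<subseteq> {S. S \<subseteq> worlds K \<and> mu_sem K (V(y := S)) a \<subseteq> S}"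
  proof (rule Collect_mono, rule impI)
    fix S assume "S \<subseteq> worlds K \<and> mu_sem K (V'(y := S)) a \<subseteq> S"
    then show "S \<subseteq> worlds K \<and> mu_sem K (V(y := S)) a \<subseteq> S" using h[of S] by (meson order_trans)
  qed
  then have "\<Inter>{S. S \<subseteq> worlds K \<and> mu_sem K (V(y := S)) a \<subseteq> S} \<subseteq> \<Inter>{S. S \<subseteq> worlds K \<and> mu_sem K (V'(y := S)) a \<subseteq> S}"
    by (rule Inter_anti_mono)
  then show ?case by (simp only: mu_sem.simps) (rule Int_mono, assumption, rule order_refl)
next
  case (MGfp y a)
  have h: "\<And>S. mu_sem K (V(y := S)) a \<subseteq> mu_sem K (V'(y := S)) a"
    using MGfp by simp
  have "{S. S \<subseteq> worlds K \<and> S \<subseteq> mu_sem K (V(y := S)) a} \<subseteq> {S. S \<subseteq> worlds K \<and> S \<subseteq> mu_sem K (V'(y := S)) a}"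
  proof (rule Collect_mono, rule impI)
    fix S assume "S \<subseteq> worlds K \<and> S \<subseteq> mu_sem K (V(y := S)) a"
    then show "S \<subseteq> worlds K \<and> S \<subseteq> mu_sem K (V'(y := S)) a" using h[of S] by (meson order_trans)
  qed
  then show ?case by (simp only: mu_sem.simps) (rule Union_mono)
next
  case (MVar x) then show ?case by auto
next
  case (MAnd a b) then show ?case by (metis Int_mono mu_sem.simps(4))
next
  case (MOr a b) then show ?case by (metis Un_mono mu_sem.simps(5))
next
  case (MDia a) then show ?case by (simp only: mu_sem.simps) blast
next
  case (MBox a) then show ?case by (simp only: mu_sem.simps) blast
qed simp_all

definition S1 :: "bool \<Rightarrow> nat set" where "S1 b = (if b then {0} else {})"
definition S2 :: "bool \<Rightarrow> nat set" where "S2 b = (if b then UNIV else {})"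

lemma mu_K12:
  "(\<forall>x. V1 x \<inter> {0} = S1 (f x)) \<Longrightarrow> (\<forall>x. V2 x = S2 (f x)) \<Longrightarrow>
   \<exists>b. mu_sem (K1 :: 'a kripke) V1 a = S1 b \<and> mu_sem (K2 :: 'a kripke) V2 a = S2 b"
proof (induct a arbitrary: V1 V2 f)
  case (MProp p)
  then show ?case by (rule_tac x=False in exI) (auto simp: K1_def K2_def S1_def S2_def)
next
  case (MNProp p)
  then show ?case by (rule_tac x=True in exI) (auto simp: K1_def K2_def S1_def S2_def)
next
  case (MVar x)
  then show ?case by (rule_tac x="f x" in exI) (auto simp: K1_def K2_def)
next
  case (MAnd a1 a2)
  from MAnd.hyps(1)[OF MAnd.prems] MAnd.hyps(2)[OF MAnd.prems] obtain b1 b2 where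
    "mu_sem (K1 :: 'a kripke) V1 a1 = S1 b1" "mu_sem (K2 :: 'a kripke) V2 a1 = S2 b1"
    "mu_sem (K1 :: 'a kripke) V1 a2 = S1 b2" "mu_sem (K2 :: 'a kripke) V2 a2 = S2 b2" by blast
  then show ?case by (rule_tac x="b1 \<and> b2" in exI) (auto simp: S1_def S2_def)
next
  case (MOr a1 a2)
  from MOr.hyps(1)[OF MOr.prems] MOr.hyps(2)[OF MOr.prems] obtain b1 b2 where
    "mu_sem (K1 :: 'a kripke) V1 a1 = S1 b1" "mu_sem (K2 :: 'a kripke) V2 a1 = S2 b1"
    "mu_sem (K1 :: 'a kripke) V1 a2 = S1 b2" "mu_sem (K2 :: 'a kripke) V2 a2 = S2 b2" by blast
  then show ?case by (rule_tac x="b1 \<or> b2" in exI) (auto simp: S1_def S2_def)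
next
  case (MDia a)
  from MDia.hyps[OF MDia.prems] obtain b where
    "mu_sem (K1 :: 'a kripke) V1 a = S1 b" "mu_sem (K2 :: 'a kripke) V2 a = S2 b" by blast
  then show ?case by (rule_tac x="b" in exI) (auto simp: S1_def S2_def K1_def K2_def)
next
  case (MBox a)
  from MBox.hyps[OF MBox.prems] obtain b where
    "mu_sem (K1 :: 'a kripke) V1 a = S1 b" "mu_sem (K2 :: 'a kripke) V2 a = S2 b" by blast
  then show ?case by (rule_tac x="b" in exI) (auto simp: S1_def S2_def K1_def K2_def)
next
  case (MLfp y a)
  have pF1: "\<forall>x. (V1(y := {})) x \<inter> {0} = S1 ((f(y := False)) x)" 
    and pF2: "\<forall>x. (V2(y := {})) x = S2 ((f(y := False)) x)"
  proof -
    show "\<forall>x. (V1(y := {})) x \<inter> {0} = S1 ((f(y := False)) x)"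
    proof
      fix x show "(V1(y := {})) x \<inter> {0} = S1 ((f(y := False)) x)"
        using MLfp.prems(1) by (cases "x = y") (simp_all add: S1_def)
    qed
    show "\<forall>x. (V2(y := {})) x = S2 ((f(y := False)) x)"
    proof
      fix x show "(V2(y := {})) x = S2 ((f(y := False)) x)"
        using MLfp.prems(2) by (cases "x = y") (simp_all add: S2_def)
    qed
  qed
  from MLfp.hyps[OF pF1 pF2] obtain b where
    b1: "mu_sem (K1 :: 'a kripke) (V1(y := {})) a = S1 b" and
    b2: "mu_sem (K2 :: 'a kripke) (V2(y := {})) a = S2 b" by blast
  show ?case
  proof (cases b)
    case False
    have "mu_sem (K1 :: 'a kripke) V1 (MLfp y a) = {}"
      using b1 False by (auto simp: S1_def K1_def)
    moreover have "mu_sem (K2 :: 'a kripke) V2 (MLfp y a) = {}"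
      using b2 False by (auto simp: S2_def K2_def)
    ultimately show ?thesis by (rule_tac x=False in exI) (simp add: S1_def S2_def)
  next
    case True
    have "0 \<in> S" if "S \<subseteq> {0}" "mu_sem (K1 :: 'a kripke) (V1(y := S)) a \<subseteq> S" for S
    proof -
      have "mu_sem (K1 :: 'a kripke) (V1(y := {})) a \<subseteq> mu_sem K1 (V1(y := S)) a"
        by (rule mu_mono) auto
      then show ?thesis using that b1 True by (auto simp: S1_def)
    qed
    hence "mu_sem (K1 :: 'a kripke) V1 (MLfp y a) = {0}" by (auto simp: K1_def)
    moreover have "S = UNIV" if "mu_sem (K2 :: 'a kripke) (V2(y := S)) a \<subseteq> S" for S
    proof -
      have "mu_sem (K2 :: 'a kripke) (V2(y := {})) a \<subseteq> mu_sem K2 (V2(y := S)) a"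
        by (rule mu_mono) auto
      then show ?thesis using that b2 True by (auto simp: S2_def)
    qed
    hence "mu_sem (K2 :: 'a kripke) V2 (MLfp y a) = UNIV" by (auto simp: K2_def)
    ultimately show ?thesis by (rule_tac x=True in exI) (simp add: S1_def S2_def)
  qed
next
  case (MGfp y a)
  have pT1: "\<forall>x. (V1(y := {0})) x \<inter> {0} = S1 ((f(y := True)) x)" 
    and pT2: "\<forall>x. (V2(y := UNIV)) x = S2 ((f(y := True)) x)"
  proof -
    show "\<forall>x. (V1(y := {0})) x \<inter> {0} = S1 ((f(y := True)) x)"
    proof
      fix x show "(V1(y := {0})) x \<inter> {0} = S1 ((f(y := True)) x)"
        using MGfp.prems(1) by (cases "x = y") (simp_all add: S1_def)
    qed
    show "\<forall>x. (V2(y := UNIV)) x = S2 ((f(y := True)) x)"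
    proof
      fix x show "(V2(y := UNIV)) x = S2 ((f(y := True)) x)"
        using MGfp.prems(2) by (cases "x = y") (simp_all add: S2_def)
    qed
  qed
  from MGfp.hyps[OF pT1 pT2] obtain b where
    b1: "mu_sem (K1 :: 'a kripke) (V1(y := {0})) a = S1 b" and
    b2: "mu_sem (K2 :: 'a kripke) (V2(y := UNIV)) a = S2 b" by blast
  show ?case
  proof (cases b)
    case True
    have "mu_sem (K1 :: 'a kripke) V1 (MGfp y a) = {0}"
      using b1 True by (auto simp: S1_def K1_def)
    moreover have "mu_sem (K2 :: 'a kripke) V2 (MGfp y a) = UNIV"
      using b2 True by (auto simp: S2_def K2_def)
    ultimately show ?thesis by (rule_tac x=True in exI) (simp add: S1_def S2_def)
  next
    case False
    have "S = {}" if "S \<subseteq> {0}" "S \<subseteq> mu_sem (K1 :: 'a kripke) (V1(y := S)) a" for S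
    proof -
      have "mu_sem (K1 :: 'a kripke) (V1(y := S)) a \<subseteq> mu_sem K1 (V1(y := {0})) a"
        by (rule mu_mono) (use that in auto)
      then show ?thesis using that b1 False by (auto simp: S1_def)
    qed
    hence "mu_sem (K1 :: 'a kripke) V1 (MGfp y a) = {}" by (auto simp: K1_def)
    moreover have "S = {}" if "S \<subseteq> mu_sem (K2 :: 'a kripke) (V2(y := S)) a" for S
    proof -
      have "mu_sem (K2 :: 'a kripke) (V2(y := S)) a \<subseteq> mu_sem K2 (V2(y := UNIV)) a"
        by (rule mu_mono) auto
      then show ?thesis using that b2 False by (auto simp: S2_def)
    qed
    hence "mu_sem (K2 :: 'a kripke) V2 (MGfp y a) = {}" by (auto simp: K2_def)
    ultimately show ?thesis by (rule_tac x=False in exI) (simp add: S1_def S2_def)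
  qed
qed

lemma part2: "\<exists>\<phi> :: ('a::finite) sform. \<not> (\<exists>\<chi>. mu_closed \<chi> \<and>
             (\<forall>K. is_kripke K \<longrightarrow> (models K \<phi> \<longleftrightarrow> mu_models K \<chi>)))"
proof -
  fix p :: 'a
  let ?\<phi> = "ExC (State (SNot (Prop p)))"
  have a: "models K1 ?\<phi>" using Pth_K1 by (auto simp: models_def Cyc_def K1_def)
  have b: "\<not> models (K2 :: 'a kripke) ?\<phi>" by (auto simp: models_def Cyc_K2)
  show ?thesis
  proof (intro exI[of _ ?\<phi>] notI, elim exE conjE)
    fix \<chi> assume e: "\<forall>K. is_kripke K \<longrightarrow> (models K ?\<phi> \<longleftrightarrow> mu_models K \<chi>)"
    have "mu_models K1 \<chi>" using e K1_kripke a by blast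
    moreover have "\<not> mu_models (K2 :: 'a kripke) \<chi>" using e K2_kripke b by blast
    moreover obtain bb where "mu_sem (K1 :: 'a kripke) (\<lambda>_. {}) \<chi> = S1 bb"
        "mu_sem (K2 :: 'a kripke) (\<lambda>_. {}) \<chi> = S2 bb"
      using mu_K12[of "\<lambda>_. {}" "\<lambda>_. False" "\<lambda>_. {}" \<chi>] by (auto simp: S1_def S2_def)
    ultimately show False by (auto simp: mu_models_def K1_def K2_def S1_def S2_def split: if_splits)
  qed
qed



definition C :: "nat \<Rightarrow> 'a kripke" where
  "C k = \<lparr>worlds = UNIV, trans = {(n, Suc n) | n. True},
          label = (\<lambda>n. if n = k then {} else UNIV), init = 0\<rparr>"

lemma C_kripke: "is_kripke (C k :: ('a::finite) kripke)"
  by (auto simp: is_kripke_def C_def)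

lemma path_C: "\<pi> \<in> Pth (C k) w \<Longrightarrow> \<pi> i = w + i"
proof (induct i)
  case 0 then show ?case by (simp add: Pth_def)
next
  case (Suc i) then show ?case
    by (auto simp: Pth_def is_path_def C_def dest: spec[of _ i])
qed

lemma Pth_C: "Pth (C k) w = {\<lambda>i. w + i}"
proof -
  have "(\<lambda>i. w + i) \<in> Pth (C k) w" by (auto simp: Pth_def is_path_def C_def)
  moreover have "\<pi> = (\<lambda>i. w + i)" if "\<pi> \<in> Pth (C k) w" for \<pi>
    using path_C[OF that] by auto
  ultimately show ?thesis by blast
qed

lemma Cyc_C: "Cyc (C k :: 'a kripke) w = {}"
proof (rule equals0I)
  fix \<pi> assume a: "\<pi> \<in> Cyc (C k :: 'a kripke) w"
  then have p: "\<pi> \<in> Pth (C k :: 'a kripke) w" by (simp add: Cyc_def)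
  from a obtain j where "j > 0" "\<pi> j = \<pi> 0" by (auto simp: Cyc_def)
  with path_C[OF p, of j] path_C[OF p, of 0] show False by simp
qed

lemma psat_shift:
  fixes \<phi> :: "'a sform" and \<psi> :: "'a pform"
  shows "sat K w \<phi> = sat K w \<phi>"
    and "\<forall>i i'. (\<forall>m. \<pi> (i + m) = \<pi>' (i' + m)) \<longrightarrow> psat K \<pi> i \<psi> = psat K \<pi>' i' \<psi>"
proof (induct \<phi> and \<psi>)
  case (State \<phi>)
  then show ?case by (auto dest: spec[of _ 0])
next
  case (Next \<psi>)
  show ?case
  proof (intro allI impI)
    fix i i' assume h: "\<forall>m. \<pi> (i + m) = \<pi>' (i' + m)"
    have "\<forall>m. \<pi> (Suc i + m) = \<pi>' (Suc i' + m)"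
      using h by (metis add_Suc add_Suc_right)
    then show "psat K \<pi> i (Next \<psi>) = psat K \<pi>' i' (Next \<psi>)" using Next by simp
  qed
next
  case (Until \<psi>1 \<psi>2)
  show ?case
  proof (intro allI impI)
    fix i i' assume h: "\<forall>m. \<pi> (i + m) = \<pi>' (i' + m)"
    have h2: "\<forall>m. \<pi> (i + j + m) = \<pi>' (i' + j + m)" for j
      using h by (metis add.assoc)
    show "psat K \<pi> i (Until \<psi>1 \<psi>2) = psat K \<pi>' i' (Until \<psi>1 \<psi>2)"
    proof -
      have e1: "\<And>j. psat K \<pi> (i + j) \<psi>1 = psat K \<pi>' (i' + j) \<psi>1"
        using Until(1) h2 by blast
      have e2: "\<And>j. psat K \<pi> (i + j) \<psi>2 = psat K \<pi>' (i' + j) \<psi>2"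
        using Until(2) h2 by blast
      show ?thesis by (simp add: e1 e2)
    qed
  qed
qed auto

lemma sat_C_Ex: "sat (C k) w (Ex \<psi>) = psat (C k) (\<lambda>i. i) w \<psi>"
  using psat_shift(2)[of "\<lambda>i. w + i" "\<lambda>i. i" "C k" \<psi>] by (auto simp: Pth_C)
lemma sat_C_All: "sat (C k) w (All \<psi>) = psat (C k) (\<lambda>i. i) w \<psi>"
  using psat_shift(2)[of "\<lambda>i. w + i" "\<lambda>i. i" "C k" \<psi>] by (auto simp: Pth_C)

primrec sd :: "'a sform \<Rightarrow> nat" and pd :: "'a pform \<Rightarrow> nat" where
  "sd (Prop p) = 0"
| "sd (SNot \<phi>) = sd \<phi>"
| "sd (SAnd \<phi> \<psi>) = max (sd \<phi>) (sd \<psi>)"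
| "sd (SOr \<phi> \<psi>) = max (sd \<phi>) (sd \<psi>)"
| "sd (Ex \<psi>) = pd \<psi>"
| "sd (All \<psi>) = pd \<psi>"
| "sd (ExC \<psi>) = pd \<psi>"
| "sd (AllC \<psi>) = pd \<psi>"
| "pd (State \<phi>) = sd \<phi>"
| "pd (PNot \<psi>) = pd \<psi>"
| "pd (PAnd \<psi>1 \<psi>2) = max (pd \<psi>1) (pd \<psi>2)"
| "pd (POr \<psi>1 \<psi>2) = max (pd \<psi>1) (pd \<psi>2)"
| "pd (Next \<psi>) = Suc (pd \<psi>)"
| "pd (Until \<psi>1 \<psi>2) = max (pd \<psi>1) (pd \<psi>2)"

definition R :: "nat \<Rightarrow> nat \<Rightarrow> nat \<Rightarrow> nat \<Rightarrow> nat \<Rightarrow> bool" where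
  "R n k w k' w' \<longleftrightarrow> (int k - int w = int k' - int w') \<or>
      (int k - int w < 0 \<and> int k' - int w' < 0) \<or>
      (int k - int w > int n \<and> int k' - int w' > int n)"

lemma R_sym: "R n k w k' w' \<Longrightarrow> R n k' w' k w"
  unfolding R_def by auto

lemma R_mono: "R n k w k' w' \<Longrightarrow> m \<le> n \<Longrightarrow> R m k w k' w'"
  unfolding R_def by auto

lemma until_transfer:
  assumes r: "R n k w k' w'"
    and A: "\<And>x x'. R n k x k' x' \<Longrightarrow> (a x \<longleftrightarrow> a' x')"
    and B: "\<And>x x'. R n k x k' x' \<Longrightarrow> (b x \<longleftrightarrow> b' x')"
    and u: "\<exists>m. b (w + m) \<and> (\<forall>j<m. a (w + j))"
  shows "\<exists>m. b' (w' + m) \<and> (\<forall>j<m. a' (w' + j))"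
proof -
  obtain m where bm: "b (w + m)" and am: "\<forall>j<m. a (w + j)" using u by blast
  define d where "d = int k - int w"
  define d' where "d' = int k' - int w'"
  have c: "d = d' \<or> (d < 0 \<and> d' < 0) \<or> (d > int n \<and> d' > int n)"
    using r unfolding R_def d_def d'_def .
  show ?thesis
  proof (cases "d = d' \<or> (d < 0 \<and> d' < 0)")
    case True
    have rj: "R n k (w + j) k' (w' + j)" for j
      using True unfolding R_def d_def d'_def by auto
    show ?thesis
      using bm am A[OF rj] B[OF rj] by blast
  next
    case False
    with c have dn: "d > int n" "d' > int n" by auto
    define e where "e = d - int m"
    show ?thesis
    proof (cases "e > int n")
      case True
      have "R n k (w + m) k' w'" using True dn unfolding R_def e_def d_def d'_def by auto
      then have "b' (w' + 0)" using B bm by simp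
      then show ?thesis by blast
    next
      case False
      define m' where "m' = nat (d' - e)"
      have m'e: "int m' = d' - e" using False dn unfolding m'_def by auto
      have "R n k (w + m) k' (w' + m')"
        using m'e unfolding R_def e_def d_def d'_def by auto
      then have b1: "b' (w' + m')" using B bm by blast
      have "a' (w' + j)" if j: "j < m'" for j
      proof (cases "d' - int j > int n")
        case True
        have "R n k (w + 0) k' (w' + j)" using True dn unfolding R_def d_def d'_def by auto
        moreover have "0 < m" using False dn unfolding e_def by auto
        ultimately show ?thesis using A am by fastforce
      next
        case False
        define j0 where "j0 = nat (int j + d - d')"
        have j0: "int j0 = int j + d - d'" using False dn unfolding j0_def by auto
        have "j0 < m" using j0 j m'e unfolding e_def by auto
        moreover have "R n k (w + j0) k' (w' + j)"
          using j0 unfolding R_def d_def d'_def by auto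
        ultimately show ?thesis using A am by blast
      qed
      with b1 show ?thesis by blast
    qed
  qed
qed

lemma C_inv:
  fixes \<phi> :: "'a sform" and \<psi> :: "'a pform"
  shows "\<forall>n k k' w w'. sd \<phi> \<le> n \<longrightarrow> R n k w k' w' \<longrightarrow> sat (C k) w \<phi> = sat (C k') w' \<phi>"
    and "\<forall>n k k' w w'. pd \<psi> \<le> n \<longrightarrow> R n k w k' w' \<longrightarrow>
           psat (C k) (\<lambda>i. i) w \<psi> = psat (C k') (\<lambda>i. i) w' \<psi>"
proof (induct \<phi> and \<psi>)
  case (Prop p)
  show ?case
  proof (intro allI impI)
    fix n k k' w w' assume "sd (Prop p) \<le> n" "R n k w k' w'"
    then have "(w = k) = (w' = k')" unfolding R_def by auto
    then show "sat (C k) w (Prop p) = sat (C k') w' (Prop p)" by (simp add: C_def)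
  qed
next
  case (Ex \<psi>) then show ?case by (simp only: sat_C_Ex sd.simps)
next
  case (All \<psi>) then show ?case by (simp only: sat_C_All sd.simps)
next
  case (SNot a) then show ?case by (simp only: sat.simps sd.simps) blast
next
  case (PNot a) then show ?case by (simp only: psat.simps pd.simps) blast
next
  case (State a) then show ?case by (simp only: psat.simps pd.simps)
next
  case (ExC \<psi>) then show ?case by (simp add: Cyc_C)
next
  case (AllC \<psi>) then show ?case by (simp add: Cyc_C)
next
  case (SAnd a b) then show ?case by auto
next
  case (SOr a b) then show ?case by auto
next
  case (PAnd a b) then show ?case by auto
next
  case (POr a b) then show ?case by auto
next
  case (Next \<psi>)
  show ?case
  proof (intro allI impI)
    fix n k k' w w' assume d: "pd (Next \<psi>) \<le> n" and r: "R n k w k' w'"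
    then obtain n0 where n0: "n = Suc n0" "pd \<psi> \<le> n0" by (cases n) auto
    have "R n0 k (Suc w) k' (Suc w')" using r n0(1) unfolding R_def by auto
    then show "psat (C k) (\<lambda>i. i) w (Next \<psi>) = psat (C k') (\<lambda>i. i) w' (Next \<psi>)"
      using Next n0(2) by simp
  qed
next
  case (Until \<psi>1 \<psi>2)
  show ?case
  proof (intro allI impI)
    fix n k k' w w' assume d: "pd (Until \<psi>1 \<psi>2) \<le> n" and r: "R n k w k' w'"
    have d1: "pd \<psi>1 \<le> n" and d2: "pd \<psi>2 \<le> n" using d by simp_all
    have A: "\<And>x x'. R n k x k' x' \<Longrightarrow> (psat (C k) (\<lambda>i. i) x \<psi>1 \<longleftrightarrow> psat (C k') (\<lambda>i. i) x' \<psi>1)"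
      using Until(1) d1 by blast
    have B: "\<And>x x'. R n k x k' x' \<Longrightarrow> (psat (C k) (\<lambda>i. i) x \<psi>2 \<longleftrightarrow> psat (C k') (\<lambda>i. i) x' \<psi>2)"
      using Until(2) d2 by blast
    have A': "\<And>x x'. R n k' x k x' \<Longrightarrow> (psat (C k') (\<lambda>i. i) x \<psi>1 \<longleftrightarrow> psat (C k) (\<lambda>i. i) x' \<psi>1)"
      using A R_sym by blast
    have B': "\<And>x x'. R n k' x k x' \<Longrightarrow> (psat (C k') (\<lambda>i. i) x \<psi>2 \<longleftrightarrow> psat (C k) (\<lambda>i. i) x' \<psi>2)"
      using B R_sym by blast
    note t1 = until_transfer[where a="\<lambda>x. psat (C k) (\<lambda>i. i) x \<psi>1" and a'="\<lambda>x. psat (C k') (\<lambda>i. i) x \<psi>1"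
        and b="\<lambda>x. psat (C k) (\<lambda>i. i) x \<psi>2" and b'="\<lambda>x. psat (C k') (\<lambda>i. i) x \<psi>2", OF r A B]
    note t2 = until_transfer[where a'="\<lambda>x. psat (C k) (\<lambda>i. i) x \<psi>1" and a="\<lambda>x. psat (C k') (\<lambda>i. i) x \<psi>1"
        and b'="\<lambda>x. psat (C k) (\<lambda>i. i) x \<psi>2" and b="\<lambda>x. psat (C k') (\<lambda>i. i) x \<psi>2", OF R_sym[OF r] A' B']
    show "psat (C k) (\<lambda>i. i) w (Until \<psi>1 \<psi>2) = psat (C k') (\<lambda>i. i) w' (Until \<psi>1 \<psi>2)"
      unfolding psat.simps(6) using t1 t2 by (rule iffI)
  qed
qed

lemma trans_C: "(w, v) \<in> trans (C k) \<longleftrightarrow> v = Suc w" by (simp add: C_def)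
lemma worlds_C: "worlds (C k) = UNIV" by (simp add: C_def)
lemma label_C: "label (C k) w = (if w = k then {} else UNIV)" by (simp add: C_def)
lemma init_C: "init (C k) = 0" by (simp add: C_def)

lemma mu_C:
  fixes p :: 'a
  shows "mu_models (C k :: 'a kripke) (MGfp 0 (MAnd (MProp p) (MBox (MBox (MVar 0))))) \<longleftrightarrow> odd k"
proof -
  have e: "mu_sem (C k :: 'a kripke) V (MAnd (MProp p) (MBox (MBox (MVar 0)))) = {w. w \<noteq> k \<and> Suc (Suc w) \<in> V 0}" for V
    by (simp add: trans_C worlds_C label_C) blast
  have m: "mu_models (C k :: 'a kripke) (MGfp 0 (MAnd (MProp p) (MBox (MBox (MVar 0)))))
     \<longleftrightarrow> (\<exists>S. S \<subseteq> {w. w \<noteq> k \<and> Suc (Suc w) \<in> S} \<and> 0 \<in> S)"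
  proof -
    have "mu_sem (C k :: 'a kripke) (\<lambda>_. {}) (MGfp 0 (MAnd (MProp p) (MBox (MBox (MVar 0)))))
       = \<Union>{S. S \<subseteq> {w. w \<noteq> k \<and> Suc (Suc w) \<in> S}}"
      by (simp only: mu_sem.simps(9) e worlds_C fun_upd_same subset_UNIV simp_thms)
    then show ?thesis unfolding mu_models_def init_C by (simp only: Union_iff mem_Collect_eq) blast
  qed
  show ?thesis
  proof
    assume "mu_models (C k :: 'a kripke) (MGfp 0 (MAnd (MProp p) (MBox (MBox (MVar 0)))))"
    then obtain S where S: "S \<subseteq> {w. w \<noteq> k \<and> Suc (Suc w) \<in> S}" "0 \<in> S" using m by blast
    have ev: "2 * i \<in> S" for i
    proof (induct i)
      case 0 then show ?case using S by simp
    next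
      case (Suc i)
      then have "Suc (Suc (2 * i)) \<in> S" using S(1) by blast
      then show ?case by simp
    qed
    show "odd k"
    proof
      assume "even k"
      then obtain i where "k = 2 * i" by blast
      then have "k \<in> S" using ev by simp
      then show False using S(1) by blast
    qed
  next
    assume "odd k"
    then have "{w. even w} \<subseteq> {w. w \<noteq> k \<and> Suc (Suc w) \<in> {w. even w}}" by auto
    then show "mu_models (C k :: 'a kripke) (MGfp 0 (MAnd (MProp p) (MBox (MBox (MVar 0)))))"
      using m by blast
  qed
qed

lemma part3:
  fixes p :: "'a::finite"
  shows "\<not> (\<exists>\<phi> :: 'a sform.
             \<forall>K. is_kripke K \<longrightarrow> (models K \<phi> \<longleftrightarrow> mu_models K (MGfp 0 (MAnd (MProp p) (MBox (MBox (MVar 0)))))))"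
proof
  assume "\<exists>\<phi> :: 'a sform.
             \<forall>K. is_kripke K \<longrightarrow> (models K \<phi> \<longleftrightarrow> mu_models K (MGfp 0 (MAnd (MProp p) (MBox (MBox (MVar 0))))))"
  then obtain \<phi> :: "'a sform" where e: "\<forall>K. is_kripke K \<longrightarrow> (models K \<phi> \<longleftrightarrow> mu_models K (MGfp 0 (MAnd (MProp p) (MBox (MBox (MVar 0))))))"
    by blast
  define n where "n = sd \<phi>"
  have "R n (2 * n + 1) 0 (2 * n + 2) 0" unfolding R_def by auto
  then have "sat (C (2 * n + 1)) 0 \<phi> = sat (C (2 * n + 2)) 0 \<phi>"
    using C_inv(1)[of \<phi>] n_def by blast
  then have "models (C (2 * n + 1) :: 'a kripke) \<phi> = models (C (2 * n + 2)) \<phi>"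
    by (simp add: models_def C_def)
  moreover have "models (C (2 * n + 1) :: 'a kripke) \<phi>"
  proof -
    have k: "is_kripke (C (2 * n + 1) :: 'a kripke)" by (rule C_kripke)
    have "mu_models (C (2 * n + 1) :: 'a kripke) (MGfp 0 (MAnd (MProp p) (MBox (MBox (MVar 0)))))"
      by (simp only: mu_C) simp
    then show ?thesis using e k by blast
  qed
  moreover have "\<not> models (C (2 * n + 2) :: 'a kripke) \<phi>"
  proof -
    have k: "is_kripke (C (2 * n + 2) :: 'a kripke)" by (rule C_kripke)
    have "\<not> mu_models (C (2 * n + 2) :: 'a kripke) (MGfp 0 (MAnd (MProp p) (MBox (MBox (MVar 0)))))"
      by (simp only: mu_C) simp
    then show ?thesis using e k by blast
  qed
  ultimately show False by simp
qed


theorem mainTheorem6: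
  fixes p :: "'a::finite"
  shows "(\<exists>\<phi> :: 'a sform. \<not> (\<exists>\<chi>. is_ctls \<chi> \<and>
             (\<forall>K. is_kripke K \<longrightarrow> (models K \<phi> \<longleftrightarrow> models K \<chi>))))
    \<and> (\<exists>\<phi> :: 'a sform. \<not> (\<exists>\<chi>. mu_closed \<chi> \<and>
             (\<forall>K. is_kripke K \<longrightarrow> (models K \<phi> \<longleftrightarrow> mu_models K \<chi>))))
    \<and> (\<not> (\<exists>\<phi> :: 'a sform.
             \<forall>K. is_kripke K \<longrightarrow> (models K \<phi> \<longleftrightarrow> mu_models K (MGfp 0 (MAnd (MProp p) (MBox (MBox (MVar 0))))))))"
  using part1 part2 part3[of p] by blast

end
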